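(* For any nonempty configuration and integer shift $G$, the expected number of times a full execution of the inter-level sampler (Algorithm 1, run until it returns a level) enters the refinement loop (i.e. hits the boundary case $x=A_\ell(G)$) is at most $N/M(G)$.
   Context: Fix an integer $b\ge 2$. There is a set $\mathcal L$ of $N$ levels, which are consecutive integers. Each level $\ell$ holds a finite (possibly empty) multiset of normalized significands, each an integer in $[2^{b-1},2^b)$. Let $z$ be the total number of stored significands over all levels; assume $z<2^b$. For each level, $SS_\ell$ is the sum of its significands (so $SS_\ell=0$ iff the level is empty); set $SS_\ell=0$ for integers $\ell\notin\mathcal L$. The level weight is $W_\ell=SS_\ell2^\ell$. For an integer global shift $G$, $A_\ell(G)=\lfloor W_\ell2^G\rfloor+1$ if $SS_\ell>0$ and $A_\ell(G)=0$ if $SS_\ell=0$; $A(G)=\sum_\ell A_\ell(G)$ and $M(G)=\sum_\ell W_\ell2^G$. The configuration is nonempty if $z\ge1$. Inter-level sampler (Algorithm 1), with shift $G$ and $A=A(G)$: it performs independent outer iterations. In an outer iteration, draw $x$ uniformly from $\{1,\dots,A\}$ and scan the levels in decreasing order starting from the largest nonempty level. At the current level $\ell$: if $x<A_\ell(G)$, return $\ell$; if $x=A_\ell(G)$, run the refinement loop for $m=1,2,\dots$: draw $r$ uniformly from $\{0,\dots,2^b-1\}$ independently, let $t=\lfloor SS_\ell 2^{\ell+G+mb}\rfloor \bmod 2^b$; if $r<t$ return $\ell$; else if $r>t$ or $\ell+G+mb\ge 0$, abandon this outer iteration and start a new one; otherwise continue with $m+1$. If $x>A_\ell(G)$, set $x\leftarrow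 x-A_\ell(G)$ and move to the next lower level. *)

theory Defs
  imports "HOL-Probability.Probability"
begin

definition SSum :: "int set \<Rightarrow> (int \<Rightarrow> nat multiset) \<Rightarrow> int \<Rightarrow> nat" where
  "SSum L S l = (if l \<in> L then sum_mset (S l) else 0)"

definition Wt :: "int set \<Rightarrow> (int \<Rightarrow> nat multiset) \<Rightarrow> int \<Rightarrow> real" where
  "Wt L S l = real (SSum L S l) * 2 powr (real_of_int l)"

definition Al :: "int set \<Rightarrow> (int \<Rightarrow> nat multiset) \<Rightarrow> int \<Rightarrow> int \<Rightarrow> nat" where
  "Al L S G l = (if SSum L S l > 0
      then nat (\<lfloor>Wt L S l * 2 powr (real_of_int G)\<rfloor> + 1) else 0)"

definition Atot :: "int set \<Rightarrow> (int \<Rightarrow> nat multiset) \<Rightarrow> int \<Rightarrow> nat" where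
  "Atot L S G = (\<Sum>l\<in>L. Al L S G l)"

definition Mtot :: "int set \<Rightarrow> (int \<Rightarrow> nat multiset) \<Rightarrow> int \<Rightarrow> real" where
  "Mtot L S G = (\<Sum>l\<in>L. Wt L S l * 2 powr (real_of_int G))"

text \<open>Refinement loop for a level with sum s, starting at the exponent e = l+G+m*b
  (initially m = 1).  Result True = return the level, False = abandon the outer iteration.
  The nat argument is a step budget; the algorithm always stops (because of the test
  e >= 0) well before the budget nat(-(l+G)) + 1 is exhausted, so the budget-0 branch
  is never reached in the uses below.\<close>
primrec refine :: "nat \<Rightarrow> nat \<Rightarrow> nat \<Rightarrow> int \<Rightarrow> bool pmf" where
  "refine b s 0 e = return_pmf False"
| "refine b s (Suc k) e =
     pmf_of_set {0..<(2::nat)^b} \<bind> (\<lambda>r.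
       let t = nat (\<lfloor>real s * 2 powr (real_of_int e)\<rfloor> mod 2^b) in
       if r < t then return_pmf True
       else if r > t \<or> e \<ge> 0 then return_pmf False
       else refine b s k (e + int b))"

text \<open>Scanning the levels (given as a list in decreasing order) with the current value x.
  Result: (returned?, boundary case hit?).\<close>
fun scan :: "nat \<Rightarrow> int set \<Rightarrow> (int \<Rightarrow> nat multiset) \<Rightarrow> int \<Rightarrow> int list \<Rightarrow> nat
             \<Rightarrow> (bool \<times> bool) pmf" where
  "scan b L S G [] x = return_pmf (False, False)"
| "scan b L S G (l # ls) x =
     (if x < Al L S G l then return_pmf (True, False)
      else if x = Al L S G l then
        map_pmf (\<lambda>ok. (ok, True))
          (refine b (SSum L S l) (nat (- (l + G)) + 1) (l + G + int b))
      else scan b L S G ls (x - Al L S G l))"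

text \<open>One outer iteration of Algorithm 1 for levels L = {lo ..< lo + N}:
  draw x uniformly from {1..A}, scan levels in decreasing order.
  (Empty levels have A_l = 0 and are passed over without effect, so starting
  at the top level of L is the same as starting at the largest nonempty level.)\<close>
definition outer_iter :: "nat \<Rightarrow> int \<Rightarrow> nat \<Rightarrow> (int \<Rightarrow> nat multiset) \<Rightarrow> int
                          \<Rightarrow> (bool \<times> bool) pmf" where
  "outer_iter b lo N S G =
     (let L = {lo..<lo + int N} in
      pmf_of_set {1..Atot L S G} \<bind>
        (\<lambda>x. scan b L S G (rev [lo..lo + int N - 1]) x))"

text \<open>Full execution: an i.i.d. stream of outer iterations; the run stops at the first
  iteration that returns.\<close>
definition boundary_hits :: "(bool \<times> bool) stream \<Rightarrow> ennreal" where
  "boundary_hits \<omega> =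
     (\<Sum>i. if (\<forall>j<i. \<not> fst (\<omega> !! j)) \<and> snd (\<omega> !! i) then 1 else 0)"

definition expected_boundary_hits :: "nat \<Rightarrow> int \<Rightarrow> nat \<Rightarrow> (int \<Rightarrow> nat multiset) \<Rightarrow> int
                                      \<Rightarrow> ennreal" where
  "expected_boundary_hits b lo N S G =
     (\<integral>\<^sup>+ \<omega>. boundary_hits \<omega> \<partial>stream_space (measure_pmf (outer_iter b lo N S G)))"

end

theory Submission
  imports Defs
begin


lemma stream_bound:
  fixes D :: "(bool \<times> bool) pmf" and B :: real
  assumes B0: "B \<ge> 0"
    and ab: "measure_pmf.prob D {\<omega>. snd \<omega>} \<le> measure_pmf.prob D {\<omega>. fst \<omega>} * B"
  shows "(\<integral>\<^sup>+\<omega>. boundary_hits \<omega> \<partial>stream_space (measure_pmf D)) \<le> ennreal B"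
proof -
  define f where "f i \<omega> = (if (\<forall>j<i. \<not> fst (\<omega> !! j)) \<and> snd (\<omega> !! i) then 1 else 0 :: ennreal)"
    for i and \<omega> :: "(bool \<times> bool) stream"
  have p1[measurable]: "Measurable.pred (stream_space (measure_pmf D)) (\<lambda>\<omega>. fst (\<omega> !! j))" for j
    by (rule measurable_compose[OF measurable_snth]) simp
  have p2[measurable]: "Measurable.pred (stream_space (measure_pmf D)) (\<lambda>\<omega>. snd (\<omega> !! j))" for j
    by (rule measurable_compose[OF measurable_snth]) simp
  have meas[measurable]: "f i \<in> borel_measurable (stream_space (measure_pmf D))" for i
    unfolding f_def by measurable
  have fS: "f (Suc i) (x ## \<omega>) = (if fst x then 0 else 1) * f i \<omega>" for i x \<omega>
  proof -
    have allS: "(\<forall>j<Suc i. P j) \<longleftrightarrow> P 0 \<and> (\<forall>j<i. P (Suc j))" for P :: "nat \<Rightarrow> bool"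
      by (auto simp: less_Suc_eq_0_disj)
    show ?thesis unfolding f_def by (simp add: allS)
  qed
  have rec: "(\<Sum>i<Suc n. f i (x ## \<omega>)) = (if snd x then 1 else 0) + (if fst x then 0 else 1) * (\<Sum>i<n. f i \<omega>)" for n x \<omega>
    unfolding sum.lessThan_Suc_shift fS by (simp add: sum_distrib_left f_def)
  have ps: "prob_space (stream_space (measure_pmf D))"
    by (rule prob_space.prob_space_stream_space[OF prob_space_measure_pmf])
  define a where "a = measure_pmf.prob D {\<omega>. snd \<omega>}"
  define p where "p = measure_pmf.prob D {\<omega>. fst \<omega>}"
  have i1: "(\<integral>\<^sup>+x. (if snd x then 1 else 0) \<partial>measure_pmf D) = ennreal a"
  proof -
    have "(\<integral>\<^sup>+x. (if snd x then 1 else 0) \<partial>measure_pmf D) = (\<integral>\<^sup>+x. indicator {\<omega>. snd \<omega>} x \<partial>measure_pmf D)"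
      by (intro nn_integral_cong) (auto simp: indicator_def)
    also have "\<dots> = ennreal a" by (simp add: a_def measure_pmf.emeasure_eq_measure)
    finally show ?thesis .
  qed
  have i2: "(\<integral>\<^sup>+x. (if fst x then 0 else 1) * c \<partial>measure_pmf D) = ennreal (1 - p) * c" for c
  proof -
    have "(\<integral>\<^sup>+x. (if fst x then 0 else 1) * c \<partial>measure_pmf D) = (\<integral>\<^sup>+x. c * indicator (- {\<omega>. fst \<omega>}) x \<partial>measure_pmf D)"
      by (intro nn_integral_cong) (auto simp: indicator_def)
    also have "\<dots> = c * emeasure (measure_pmf D) (- {\<omega>. fst \<omega>})"
      by (simp add: nn_integral_cmult_indicator)
    also have "\<dots> = c * ennreal (1 - p)"
    proof -
      have "measure_pmf.prob D (UNIV - {\<omega>. fst \<omega>}) = 1 - measure_pmf.prob D {\<omega>. fst \<omega>}"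
        using measure_pmf.prob_compl[of "{\<omega>. fst \<omega>}" D] by simp
      then show ?thesis by (simp add: measure_pmf.emeasure_eq_measure p_def Compl_eq_Diff_UNIV)
    qed
    finally show ?thesis by (simp add: mult.commute)
  qed
  have p01: "0 \<le> p" "p \<le> 1" by (auto simp: p_def)
  have bound: "(\<integral>\<^sup>+\<omega>. (\<Sum>i<n. f i \<omega>) \<partial>stream_space (measure_pmf D)) \<le> ennreal B" for n
  proof (induction n)
    case 0 then show ?case by simp
  next
    case (Suc n)
    define E where "E = (\<integral>\<^sup>+\<omega>. (\<Sum>i<n. f i \<omega>) \<partial>stream_space (measure_pmf D))"
    have "(\<integral>\<^sup>+\<omega>. (\<Sum>i<Suc n. f i \<omega>) \<partial>stream_space (measure_pmf D))
        = (\<integral>\<^sup>+x. (\<integral>\<^sup>+\<omega>. (\<Sum>i<Suc n. f i (x ## \<omega>)) \<partial>stream_space (measure_pmf D)) \<partial>measure_pmf D)"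
      by (rule prob_space.nn_integral_stream_space[OF prob_space_measure_pmf]) measurable
    also have "\<dots> = (\<integral>\<^sup>+x. (if snd x then 1 else 0) + (if fst x then 0 else 1) * E \<partial>measure_pmf D)"
      unfolding rec E_def
      by (intro nn_integral_cong, subst nn_integral_add) (auto simp: nn_integral_cmult prob_space.emeasure_space_1[OF ps])
    also have "\<dots> = ennreal a + ennreal (1 - p) * E"
      by (subst nn_integral_add) (auto simp: i1 i2)
    also have "\<dots> \<le> ennreal a + ennreal (1 - p) * ennreal B"
      using Suc.IH unfolding E_def by (intro add_left_mono mult_left_mono) auto
    also have "\<dots> = ennreal (a + (1 - p) * B)"
      using p01 B0 by (simp add: ennreal_mult ennreal_plus a_def)
    also have "\<dots> \<le> ennreal B"
      using ab unfolding a_def[symmetric] p_def[symmetric] by (intro ennreal_leI) (simp add: algebra_simps)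
    finally show ?case .
  qed
  have "(\<integral>\<^sup>+\<omega>. boundary_hits \<omega> \<partial>stream_space (measure_pmf D)) = (\<Sum>i. \<integral>\<^sup>+\<omega>. f i \<omega> \<partial>stream_space (measure_pmf D))"
    unfolding boundary_hits_def f_def[symmetric] by (rule nn_integral_suminf) simp
  also have "\<dots> \<le> ennreal B"
    unfolding suminf_eq_SUP
  proof (rule SUP_least)
    fix n show "(\<Sum>i<n. \<integral>\<^sup>+\<omega>. f i \<omega> \<partial>stream_space (measure_pmf D)) \<le> ennreal B"
      using bound[of n] by (subst nn_integral_sum[symmetric]) auto
  qed
  finally show ?thesis .
qed

lemma digit:
  fixes z :: real and b :: nat
  shows "frac (z / 2 ^ b) = (real_of_int (\<lfloor>z\<rfloor> mod 2 ^ b) + frac z) / 2 ^ b"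
proof -
  have fl: "\<lfloor>z / 2 ^ b\<rfloor> = \<lfloor>z\<rfloor> div 2 ^ b"
    using floor_divide_real_eq_div[of "2 ^ b" z] by simp
  have "real_of_int (\<lfloor>z\<rfloor> mod 2 ^ b) = real_of_int \<lfloor>z\<rfloor> - 2 ^ b * real_of_int (\<lfloor>z\<rfloor> div 2 ^ b)"
    by (simp add: mod_div_mult_eq[symmetric] minus_div_mult_eq_mod[symmetric])
  then show ?thesis
    by (simp add: frac_def fl field_simps)
qed

lemma refine_sum:
  fixes t :: nat and c :: real
  assumes "t < 2 ^ b"
  shows "(\<Sum>r\<in>{0..<(2::nat)^b}. (if r < t then 1 else if r = t then c else 0)) = real t + c"
proof -
  have "(\<Sum>r\<in>{0..<(2::nat)^b}. (if r < t then 1 else if r = t then c else 0))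
      = (\<Sum>r\<in>{0..<(2::nat)^b}. (if r < t then 1 else 0)) + (\<Sum>r\<in>{0..<(2::nat)^b}. (if r = t then c else 0))"
    by (subst sum.distrib[symmetric]) (intro sum.cong, auto)
  also have "(\<Sum>r\<in>{0..<(2::nat)^b}. (if r < t then 1 else 0)) = (\<Sum>r\<in>{0..<t}. 1)"
    using assms by (intro sum.mono_neutral_cong_right) auto
  also have "(\<Sum>r\<in>{0..<(2::nat)^b}. (if r = t then c else 0)) = c" using assms by simp
  finally show ?thesis by simp
qed

lemma refine_ge:
  fixes b s k :: nat and e :: int
  assumes b1: "b \<ge> 1"
  shows "e + int b * (int k - 1) \<ge> 0 \<Longrightarrow> k \<ge> 1 \<Longrightarrow>
    frac (real s * 2 powr (real_of_int e) / 2 ^ b) \<le> pmf (refine b s k e) True"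
proof (induction k arbitrary: e)
  case 0 then show ?case by simp
next
  case (Suc k)
  define z where "z = real s * 2 powr (real_of_int e)"
  define t where "t = nat (\<lfloor>z\<rfloor> mod 2^b)"
  have tlt: "t < 2 ^ b" unfolding t_def by (simp add: nat_less_iff)
  have tr: "real t = real_of_int (\<lfloor>z\<rfloor> mod 2 ^ b)" unfolding t_def by simp
  define c where "c = (if e \<ge> 0 then 0 else pmf (refine b s k (e + int b)) True)"
  have tc: "pmf (if r < t then return_pmf True else if t < r \<or> 0 \<le> e then return_pmf False
      else refine b s k (e + int b)) True = (if r < t then 1 else if r = t then c else 0)" for r
    by (cases "r < t"; cases "t < r"; cases "0 \<le> e") (simp_all add: c_def)
  have "pmf (refine b s (Suc k) e) True = (\<Sum>r\<in>{0..<(2::nat)^b}. pmf (if r < t then return_pmf True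
          else if t < r \<or> 0 \<le> e then return_pmf False else refine b s k (e + int b)) True) / 2^b"
    by (simp only: refine.simps Let_def z_def[symmetric] t_def[symmetric], subst pmf_bind_pmf_of_set) auto
  also have "\<dots> = (\<Sum>r\<in>{0..<(2::nat)^b}. (if r < t then 1 else if r = t then c else 0)) / 2 ^ b"
    by (simp only: tc)
  also have "\<dots> = (real t + c) / 2 ^ b" using refine_sum[OF tlt] by simp
  finally have eq: "pmf (refine b s (Suc k) e) True = (real t + c) / 2 ^ b" .
  have "frac z \<le> c"
  proof (cases "e \<ge> 0")
    case True
    then have "z = real (s * 2 ^ nat e)" unfolding z_def
      by (simp add: powr_realpow[symmetric])
    then have "frac z = 0" by simp
    then show ?thesis using True c_def by (simp del: frac_eq_0_iff)
  next
    case False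
    then have k1: "k \<ge> 1" using Suc.prems by (cases k) auto
    have "(e + int b) + int b * (int k - 1) \<ge> 0" using Suc.prems by (simp add: algebra_simps)
    from Suc.IH[OF this k1] have "frac (real s * 2 powr real_of_int (e + int b) / 2 ^ b) \<le> pmf (refine b s k (e + int b)) True" .
    moreover have "real s * 2 powr real_of_int (e + int b) / 2 ^ b = z"
      unfolding z_def by (simp add: powr_add powr_realpow)
    ultimately show ?thesis using False c_def by simp
  qed
  then show ?case
    unfolding eq z_def[symmetric] digit tr[symmetric] by (simp add: divide_right_mono)
qed



lemma measure_bind_pmf_of_set:
  assumes "finite A" "A \<noteq> {}"
  shows "measure_pmf.prob (pmf_of_set A \<bind> f) E = (\<Sum>x\<in>A. measure_pmf.prob (f x) E) / real (card A)"
proof -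
  have cA: "card A > 0" using assms by (simp add: card_gt_0_iff)
  have "ennreal (measure_pmf.prob (pmf_of_set A \<bind> f) E) = emeasure (measure_pmf (pmf_of_set A \<bind> f)) E"
    by (simp add: measure_pmf.emeasure_eq_measure)
  also have "\<dots> = (\<integral>\<^sup>+x. emeasure (measure_pmf (f x)) E \<partial>measure_pmf (pmf_of_set A))"
    by simp
  also have "\<dots> = (\<Sum>x\<in>A. emeasure (measure_pmf (f x)) E) / of_nat (card A)"
    using assms by (simp add: nn_integral_pmf_of_set)
  also have "\<dots> = ennreal ((\<Sum>x\<in>A. measure_pmf.prob (f x) E) / real (card A))"
    using cA by (simp add: measure_pmf.emeasure_eq_measure divide_ennreal sum_nonneg ennreal_of_nat_eq_real_of_nat)
  finally show ?thesis by (simp add: divide_nonneg_nonneg sum_nonneg)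
qed

lemma scan_hit:
  "finite X \<Longrightarrow> 0 \<notin> X \<Longrightarrow>
   (\<Sum>x\<in>X. measure_pmf.prob (scan b L S G ls x) {\<omega>. snd \<omega>}) \<le> real (length ls)"
proof (induction ls arbitrary: X)
  case Nil then show ?case by simp
next
  case (Cons l ls)
  define a where "a = Al L S G l"
  define g where "g y = measure_pmf.prob (scan b L S G ls y) {\<omega>. snd \<omega>}" for y
  have pw: "measure_pmf.prob (scan b L S G (l # ls) x) {\<omega>. snd \<omega>}
      \<le> (if x = a then 1 else 0) + (if a < x then g (x - a) else 0)" for x
  proof -
    consider "x < a" | "x = a" | "a < x" by linarith
    then show ?thesis
    proof cases
      case 1 then show ?thesis by (simp add: a_def)
    next
      case 2 then show ?thesis by simp
    next
      case 3 then show ?thesis by (simp add: a_def g_def)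
    qed
  qed
  have "(\<Sum>x\<in>X. measure_pmf.prob (scan b L S G (l # ls) x) {\<omega>. snd \<omega>})
      \<le> (\<Sum>x\<in>X. (if x = a then 1 else 0) + (if a < x then g (x - a) else 0))"
    by (intro sum_mono pw)
  also have "\<dots> = (\<Sum>x\<in>X. (if x = a then 1 else 0)) + (\<Sum>x\<in>X. (if a < x then g (x - a) else 0))"
    by (simp add: sum.distrib)
  also have "(\<Sum>x\<in>X. (if x = a then 1 else 0::real)) \<le> 1"
    using Cons.prems by (simp add: sum.delta)
  also have "(\<Sum>x\<in>X. (if a < x then g (x - a) else 0)) = (\<Sum>x\<in>{x\<in>X. a < x}. g (x - a))"
    using Cons.prems by (simp add: sum.inter_filter)
  also have "\<dots> = (\<Sum>y\<in>(\<lambda>x. x - a) ` {x\<in>X. a < x}. g y)"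
    by (subst sum.reindex) (auto simp: inj_on_def)
  also have "\<dots> \<le> real (length ls)"
    unfolding g_def using Cons.prems by (intro Cons.IH) auto
  finally show ?case by simp
qed



lemma budget_ok:
  fixes b :: nat and e :: int
  assumes "b \<ge> 1"
  shows "0 \<le> (e + int b) + int b * (int (nat (- e) + 1) - 1)"
proof (cases "e \<ge> 0")
  case True then show ?thesis by simp
next
  case False
  then have "nat (- e) = - e" by simp
  moreover have "int b * (- e) \<ge> 1 * (- e)" using False assms by (intro mult_right_mono) auto
  ultimately show ?thesis by simp
qed

lemma scan_ret:
  assumes b1: "b \<ge> 1"
  shows "(\<Sum>l\<leftarrow>ls. Wt L S l * 2 powr real_of_int G)
     \<le> (\<Sum>x\<in>{1..sum_list (map (Al L S G) ls)}. measure_pmf.prob (scan b L S G ls x) {\<omega>. fst \<omega>})"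
proof (induction ls)
  case Nil then show ?case by simp
next
  case (Cons l ls)
  define a where "a = Al L S G l"
  define T where "T = sum_list (map (Al L S G) ls)"
  define F where "F x = measure_pmf.prob (scan b L S G (l # ls) x) {\<omega>. fst \<omega>}" for x
  define g where "g y = measure_pmf.prob (scan b L S G ls y) {\<omega>. fst \<omega>}" for y
  have split: "(\<Sum>x\<in>{1..a + T}. F x) = (\<Sum>x\<in>{1..a}. F x) + (\<Sum>x\<in>{a + 1..a + T}. F x)"
    by (rule sum.ub_add_nat) simp
  have "(\<Sum>x\<in>{a + 1..a + T}. F x) = (\<Sum>x\<in>{1 + a..T + a}. F x)" by (simp add: add.commute)
  also have "\<dots> = (\<Sum>i\<in>{1..T}. F (i + a))" by (rule sum.shift_bounds_cl_nat_ivl)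
  also have "\<dots> = (\<Sum>i\<in>{1..T}. g i)"
    by (intro sum.cong refl) (auto simp: F_def g_def a_def)
  finally have second: "(\<Sum>x\<in>{a + 1..a + T}. F x) = (\<Sum>i\<in>{1..T}. g i)" .
  have first: "Wt L S l * 2 powr real_of_int G \<le> (\<Sum>x\<in>{1..a}. F x)"
  proof (cases "SSum L S l > 0")
    case False
    then have "Wt L S l = 0" by (simp add: Wt_def)
    then show ?thesis by (simp add: F_def sum_nonneg)
  next
    case True
    define w where "w = Wt L S l * 2 powr real_of_int G"
    have w0: "w \<ge> 0" by (simp add: w_def Wt_def)
    define m where "m = nat \<lfloor>w\<rfloor>"
    have mr: "real m = real_of_int \<lfloor>w\<rfloor>" using w0 by (simp add: m_def)
    have aS: "a = Suc m" using True w0 by (simp add: a_def Al_def m_def w_def nat_add_distrib)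
    define R where "R = refine b (SSum L S l) (nat (- (l + G)) + 1) (l + G + int b)"
    have ct: "{x::bool. x} = {True}" by auto
    have "F a = measure_pmf.prob R {True}"
      using True by (simp add: F_def a_def R_def vimage_def ct del: refine.simps)
    then have Fa: "F a = pmf R True" by (simp add: measure_pmf_single)
    have Fm: "(\<Sum>x\<in>{1..m}. F x) = real m"
    proof -
      have "(\<Sum>x\<in>{1..m}. F x) = (\<Sum>x\<in>{1..m}. 1)"
      proof (intro sum.cong refl)
        fix x assume "x \<in> {1..m}"
        then have "x < Al L S G l" using aS unfolding a_def by auto
        then show "F x = 1" by (simp add: F_def)
      qed
      then show ?thesis by simp
    qed
    have "frac (real (SSum L S l) * 2 powr real_of_int (l + G + int b) / 2 ^ b) \<le> pmf R True"
      unfolding R_def by (rule refine_ge[OF b1 budget_ok[OF b1]]) simp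
    moreover have "real (SSum L S l) * 2 powr real_of_int (l + G + int b) / 2 ^ b = w"
      by (simp add: w_def Wt_def powr_add powr_realpow)
    ultimately have "frac w \<le> F a" using Fa by simp
    then have "w \<le> real m + F a" using mr by (simp add: frac_def)
    also have "\<dots> = (\<Sum>x\<in>{1..a}. F x)" using Fm aS by simp
    finally show ?thesis unfolding w_def .
  qed
  have "(\<Sum>l\<leftarrow>l # ls. Wt L S l * 2 powr real_of_int G)
      = Wt L S l * 2 powr real_of_int G + (\<Sum>l\<leftarrow>ls. Wt L S l * 2 powr real_of_int G)" by simp
  also have "\<dots> \<le> (\<Sum>x\<in>{1..a}. F x) + (\<Sum>i\<in>{1..T}. g i)"
    using first Cons.IH unfolding g_def T_def by (rule add_mono)
  also have "\<dots> = (\<Sum>x\<in>{1..a + T}. F x)" using split second by simp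
  finally show ?case by (simp add: F_def a_def T_def)
qed



theorem mainTheorem4:
  fixes b :: nat and lo :: int and N :: nat and S :: "int \<Rightarrow> nat multiset" and G :: int
  defines "L \<equiv> {lo..<lo + int N}"
  assumes b2: "b \<ge> 2"
    and sig: "\<forall>l\<in>L. \<forall>s\<in>#S l. 2 ^ (b - 1) \<le> s \<and> s < 2 ^ b"
    and zbound: "(\<Sum>l\<in>L. size (S l)) < 2 ^ b"
    and nonempty: "(\<Sum>l\<in>L. size (S l)) \<ge> 1"
  shows "expected_boundary_hits b lo N S G \<le> ennreal (real N / Mtot L S G)"
proof -
  have b1: "b \<ge> 1" using b2 by simp
  define ls where "ls = rev [lo..lo + int N - 1]"
  have setls: "set ls = L" unfolding ls_def L_def by auto
  have dls: "distinct ls" unfolding ls_def by simp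
  have lenls: "length ls = N" unfolding ls_def by simp
  define A where "A = Atot L S G"
  define M where "M = Mtot L S G"
  have A_eq: "A = sum_list (map (Al L S G) ls)"
    unfolding A_def Atot_def setls[symmetric] by (rule sum.distinct_set_conv_list[OF dls])
  have M_eq: "M = (\<Sum>l\<leftarrow>ls. Wt L S l * 2 powr real_of_int G)"
    unfolding M_def Mtot_def setls[symmetric] by (rule sum.distinct_set_conv_list[OF dls])
  obtain l0 where l0L: "l0 \<in> L" and sz: "size (S l0) \<noteq> 0"
    using nonempty by (metis not_one_le_zero sum.neutral)
  then have "S l0 \<noteq> {#}" by auto
  then obtain s0 where s0: "s0 \<in># S l0" by (rule multiset_nonemptyE)
  have "2 ^ (b - 1) \<le> s0" using sig l0L s0 by blast
  moreover have "(0::nat) < 2 ^ (b - 1)" by simp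
  ultimately have s01: "s0 \<ge> 1" by linarith
  from multi_member_split[OF s0] obtain R where "S l0 = add_mset s0 R" by blast
  then have "sum_mset (S l0) \<ge> s0" by simp
  then have SS0: "SSum L S l0 > 0" using l0L s01 by (simp add: SSum_def)
  have finL: "finite L" unfolding L_def by simp
  have "Al L S G l0 > 0" using SS0 by (simp add: Al_def Wt_def)
  then have Apos: "A > 0" unfolding A_def Atot_def
    using finL l0L by (metis (no_types) gr0I sum_eq_0_iff)
  have Wpos: "Wt L S l0 * 2 powr real_of_int G > 0" using SS0 by (simp add: Wt_def)
  have Mpos: "M > 0" unfolding M_def Mtot_def
  proof -
    have "(\<Sum>l\<in>L. Wt L S l * 2 powr real_of_int G) \<ge> Wt L S l0 * 2 powr real_of_int G"
      using finL l0L by (intro member_le_sum) (auto simp: Wt_def)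
    then show "(\<Sum>l\<in>L. Wt L S l * 2 powr real_of_int G) > 0" using Wpos by linarith
  qed
  define D where "D = outer_iter b lo N S G"
  have D_eq: "D = pmf_of_set {1..A} \<bind> scan b L S G ls"
    unfolding D_def outer_iter_def ls_def L_def A_def by (simp add: Let_def)
  have ne: "{1..A} \<noteq> {}" using Apos by simp
  have hit: "measure_pmf.prob D {\<omega>. snd \<omega>} \<le> real N / real A"
  proof -
    have "measure_pmf.prob D {\<omega>. snd \<omega>} = (\<Sum>x\<in>{1..A}. measure_pmf.prob (scan b L S G ls x) {\<omega>. snd \<omega>}) / real A"
      unfolding D_eq by (subst measure_bind_pmf_of_set) (use ne in auto)
    also have "\<dots> \<le> real N / real A"
      using scan_hit[of "{1..A}" b L S G ls] lenls Apos by (intro divide_right_mono) auto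
    finally show ?thesis .
  qed
  have ret: "M / real A \<le> measure_pmf.prob D {\<omega>. fst \<omega>}"
  proof -
    have "measure_pmf.prob D {\<omega>. fst \<omega>} = (\<Sum>x\<in>{1..A}. measure_pmf.prob (scan b L S G ls x) {\<omega>. fst \<omega>}) / real A"
      unfolding D_eq by (subst measure_bind_pmf_of_set) (use ne in auto)
    moreover have "M \<le> (\<Sum>x\<in>{1..A}. measure_pmf.prob (scan b L S G ls x) {\<omega>. fst \<omega>})"
      unfolding M_eq A_eq by (rule scan_ret[OF b1])
    ultimately show ?thesis by (simp add: divide_right_mono)
  qed
  have key: "measure_pmf.prob D {\<omega>. snd \<omega>} \<le> measure_pmf.prob D {\<omega>. fst \<omega>} * (real N / M)"
  proof -
    have "real N / real A = (M / real A) * (real N / M)" using Mpos Apos by (simp add: field_simps)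
    also have "\<dots> \<le> measure_pmf.prob D {\<omega>. fst \<omega>} * (real N / M)"
      using ret Mpos by (intro mult_right_mono) auto
    finally show ?thesis using hit by linarith
  qed
  have "expected_boundary_hits b lo N S G = (\<integral>\<^sup>+\<omega>. boundary_hits \<omega> \<partial>stream_space (measure_pmf D))"
    unfolding expected_boundary_hits_def D_def ..
  also have "\<dots> \<le> ennreal (real N / M)"
    using Mpos key by (intro stream_bound) auto
  finally show ?thesis unfolding M_def .
qed

end
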